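(* There exist absolute constants $C_0,C_1>0$ such that for every integer $t>C_0$, setting $I=[-C_0\sqrt t,\ C_0\sqrt t]$, every nonzero polynomial $p:\mathbb R\to\mathbb R$ of degree at most $t$ with $\mathbf E_{x\sim\mathcal N(0,1)}[p(x)]=0$ satisfies $\inf_{x\in I}p(x)<0$ and $$\frac{\sup_{x\in I}p(x)}{\big|\inf_{x\in I}p(x)\big|}\ \le\ 2^{C_1 t}.$$ *)

theory Defs
  imports "HOL-Probability.Probability" "HOL-Computational_Algebra.Polynomial"
begin

definition gauss_expect :: "(real \<Rightarrow> real) \<Rightarrow> real" where
  "gauss_expect f = (\<integral>x. std_normal_density x * f x \<partial>lborel)"

end

theory Submission
  imports Defs
begin


lemma poly_sum_le_deg:
  fixes p :: "real poly"
  assumes "degree p \<le> t"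
  shows "poly p x = (\<Sum>i\<le>t. coeff p i * x ^ i)"
proof -
  have "poly p x = (\<Sum>i\<le>degree p. coeff p i * x ^ i)" by (rule poly_altdef)
  also have "\<dots> = (\<Sum>i\<le>t. coeff p i * x ^ i)"
    by (rule sum.mono_neutral_left) (use assms in \<open>auto simp: coeff_eq_0\<close>)
  finally show ?thesis .
qed

lemma coeff_prod_lin_bound:
  fixes a :: "nat \<Rightarrow> real"
  assumes "finite F" "\<forall>k\<in>F. \<bar>a k\<bar> \<le> 1"
  shows "\<bar>coeff (\<Prod>k\<in>F. [:- a k, 1:]) i\<bar> \<le> real (card F choose i)"
  using assms
proof (induction F arbitrary: i rule: finite_induct)
  case empty
  then show ?case by (cases i) auto
next
  case (insert x F)
  let ?P = "\<Prod>k\<in>F. [:- a k, 1:]"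
  have e: "(\<Prod>k\<in>insert x F. [:- a k, 1:]) = smult (- a x) ?P + pCons 0 ?P"
    using insert by (simp add: mult_pCons_left)
  have ax: "\<bar>a x\<bar> \<le> 1" using insert by auto
  show ?case
  proof (cases i)
    case 0
    have "\<bar>coeff (smult (- a x) ?P + pCons 0 ?P) 0\<bar> = \<bar>a x\<bar> * \<bar>coeff ?P 0\<bar>"
      by (simp add: abs_mult)
    also have "\<dots> \<le> 1 * real (card F choose 0)"
      using insert(3)[of 0] insert(4) ax by (intro mult_mono) auto
    finally show ?thesis using e 0 insert by simp
  next
    case (Suc j)
    have "\<bar>coeff (smult (- a x) ?P + pCons 0 ?P) (Suc j)\<bar> \<le> \<bar>a x\<bar> * \<bar>coeff ?P (Suc j)\<bar> + \<bar>coeff ?P j\<bar>"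
      using abs_triangle_ineq4[of "coeff ?P j" "a x * coeff ?P (Suc j)"] by (simp add: abs_mult)
    also have "\<dots> \<le> 1 * real (card F choose Suc j) + real (card F choose j)"
      using insert(3)[of "Suc j"] insert(3)[of j] insert(4) ax
      by (intro add_mono mult_mono) auto
    finally show ?thesis using e Suc insert by simp
  qed
qed

lemma lagrange_interp:
  fixes y :: "nat \<Rightarrow> real" and q :: "real poly"
  assumes inj: "inj_on y {..t}" and deg: "degree q \<le> t"
  shows "q = (\<Sum>j\<le>t. smult (poly q (y j) / (\<Prod>k\<in>{..t}-{j}. (y j - y k))) (\<Prod>k\<in>{..t}-{j}. [:- y k, 1:]))"
    (is "q = ?L")
proof (rule poly_eqI_degree[where A="y ` {..t}"])
  have card: "card (y ` {..t}) = Suc t" using inj by (simp add: card_image)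
  show "degree q < card (y ` {..t})" using card deg by simp
  have "degree ?L \<le> t"
  proof (rule degree_sum_le)
    fix j assume j: "j \<in> {..t}"
    have "degree (\<Prod>k\<in>{..t}-{j}. [:- y k, 1:]) \<le> (\<Sum>k\<in>{..t}-{j}. degree [:- y k, 1:])"
      using degree_prod_sum_le[of "{..t}-{j}" "\<lambda>k. [:- y k, 1:]"] by (simp add: o_def)
    also have "\<dots> = t" using j by simp
    finally show "degree (smult (poly q (y j) / (\<Prod>k\<in>{..t}-{j}. (y j - y k))) (\<Prod>k\<in>{..t}-{j}. [:- y k, 1:])) \<le> t"
      using degree_smult_le order_trans by blast
  qed simp
  then show "degree ?L < card (y ` {..t})" using card by simp
  fix z assume "z \<in> y ` {..t}"
  then obtain i where i: "i \<le> t" "z = y i" by auto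
  have dnz: "(\<Prod>k\<in>{..t}-{j}. (y j - y k)) \<noteq> 0" if "j \<le> t" for j
    using inj that by (auto simp: inj_on_def)
  have other: "poly (smult (poly q (y j) / (\<Prod>k\<in>{..t}-{j}. (y j - y k))) (\<Prod>k\<in>{..t}-{j}. [:- y k, 1:])) (y i) = 0"
    if "j \<in> {..t} - {i}" for j
  proof -
    have "(\<Prod>k\<in>{..t}-{j}. poly [:- y k, 1:] (y i)) = 0"
      using that i by (intro prod_zero) auto
    then show ?thesis by (simp add: poly_prod)
  qed
  have "poly ?L (y i) = (\<Sum>j\<in>{..t}. poly (smult (poly q (y j) / (\<Prod>k\<in>{..t}-{j}. (y j - y k))) (\<Prod>k\<in>{..t}-{j}. [:- y k, 1:])) (y i))"
    by (simp add: poly_sum)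
  also have "\<dots> = poly (smult (poly q (y i) / (\<Prod>k\<in>{..t}-{i}. (y i - y k))) (\<Prod>k\<in>{..t}-{i}. [:- y k, 1:])) (y i)"
  proof -
    let ?F = "\<lambda>j. poly (smult (poly q (y j) / (\<Prod>k\<in>{..t}-{j}. (y j - y k))) (\<Prod>k\<in>{..t}-{j}. [:- y k, 1:])) (y i)"
    have "sum ?F {..t} = ?F i + sum ?F ({..t}-{i})" using i by (intro sum.remove) auto
    moreover have "sum ?F ({..t}-{i}) = 0" by (rule sum.neutral) (use other in blast)
    ultimately show ?thesis by simp
  qed
  also have "\<dots> = poly q (y i)"
    using dnz[OF i(1)] by (simp add: poly_prod)
  finally show "poly q z = poly ?L z" using i by simp
qed

lemma fact_lower: "real t ^ t \<le> 3 ^ t * fact t"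
proof -
  have "(\<Sum>n\<in>{t}. real t ^ n /\<^sub>R fact n) \<le> (\<Sum>n. real t ^ n /\<^sub>R fact n)"
    by (rule sum_le_suminf) (use summable_exp[of "real t"] in \<open>auto simp: divide_inverse mult.commute\<close>)
  also have "\<dots> = exp (real t)" by (rule sums_unique[OF exp_converges, symmetric])
  also have "\<dots> = exp 1 ^ t" using exp_of_nat_mult[of t 1] by simp
  also have "\<dots> \<le> 3 ^ t" by (rule power_mono) (use exp_le in auto)
  finally have "real t ^ t / fact t \<le> 3 ^ t" by (simp add: divide_inverse mult.commute)
  then show ?thesis by (simp add: divide_le_eq mult.commute)
qed

lemma prod_dist:
  assumes "j \<le> t"
  shows "(\<Prod>k\<in>{..t}-{j}. \<bar>real j - real k\<bar>) = fact j * fact (t - j)"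
  using assms
proof (induction t rule: dec_induct)
  case base
  have "{..j}-{j} = {0..<j}" by auto
  then have "(\<Prod>k\<in>{..j}-{j}. \<bar>real j - real k\<bar>) = (\<Prod>k\<in>{0..<j}. real (j - k))"
    by (intro prod.cong) auto
  also have "\<dots> = fact j" by (simp add: fact_prod_rev)
  finally show ?case by simp
next
  case (step n)
  have "{..Suc n}-{j} = insert (Suc n) ({..n}-{j})" using step by auto
  then have "(\<Prod>k\<in>{..Suc n}-{j}. \<bar>real j - real k\<bar>) = \<bar>real j - real (Suc n)\<bar> * (\<Prod>k\<in>{..n}-{j}. \<bar>real j - real k\<bar>)"
    by simp
  also have "\<dots> = real (Suc n - j) * (fact j * fact (n - j))" using step by simp
  also have "\<dots> = fact j * fact (Suc n - j)"
    using step by (simp add: Suc_diff_le)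
  finally show ?case .
qed

lemma node_denom:
  assumes t: "t \<ge> 1" and j: "j \<le> t"
  shows "1 / \<bar>\<Prod>k\<in>{..t}-{j}. (real j / (4 * real t) - real k / (4 * real t))\<bar> \<le> 24 ^ t"
proof -
  have c: "card ({..t}-{j}) = t" using j by simp
  have "(\<Prod>k\<in>{..t}-{j}. (real j / (4 * real t) - real k / (4 * real t)))
      = (\<Prod>k\<in>{..t}-{j}. (real j - real k) * (1 / (4 * real t)))"
    by (intro prod.cong) (auto simp: diff_divide_distrib[symmetric])
  also have "\<dots> = (\<Prod>k\<in>{..t}-{j}. (real j - real k)) * (1 / (4 * real t)) ^ t"
    by (simp only: prod.distrib prod_constant c)
  finally have "\<bar>\<Prod>k\<in>{..t}-{j}. (real j / (4 * real t) - real k / (4 * real t))\<bar>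
      = fact j * fact (t - j) / (4 * real t) ^ t"
    using prod_dist[OF j] by (simp add: abs_mult abs_prod power_divide)
  moreover have "fact j * fact (t - j) * real (t choose j) = fact t"
  proof -
    have "real (fact j * fact (t - j) * (t choose j)) = real (fact t)"
      by (simp only: binomial_fact_lemma[OF j])
    then show ?thesis by (simp only: of_nat_mult of_nat_fact)
  qed
  moreover have "real (t choose j) \<le> 2 ^ t"
  proof -
    have "real (t choose j) \<le> real (2 ^ t)" by (simp only: of_nat_le_iff binomial_le_pow2)
    then show ?thesis by simp
  qed
  moreover have "real t ^ t \<le> 3 ^ t * fact t" by (rule fact_lower)
  moreover have tp: "real t > 0" using t by simp
  ultimately show ?thesis
  proof -
    assume e: "\<bar>\<Prod>k\<in>{..t}-{j}. (real j / (4 * real t) - real k / (4 * real t))\<bar> = fact j * fact (t - j) / (4 * real t) ^ t"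
      and f: "fact j * fact (t - j) * real (t choose j) = (fact t :: real)"
      and b: "real (t choose j) \<le> 2 ^ t" and l: "real t ^ t \<le> 3 ^ t * fact t"
    have fp: "(fact j * fact (t - j) :: real) > 0" by simp
    have "fact t \<le> fact j * fact (t - j) * (2::real) ^ t"
      by (subst f[symmetric], rule mult_left_mono[OF b]) (use fp in auto)
    then have "3 ^ t * fact t \<le> 3 ^ t * (fact j * fact (t - j) * (2::real) ^ t)"
      by (intro mult_left_mono) auto
    then have "real t ^ t \<le> 3 ^ t * (fact j * fact (t - j) * 2 ^ t)"
      using l by linarith
    then have "4 ^ t * real t ^ t \<le> 4 ^ t * (3 ^ t * (fact j * fact (t - j) * 2 ^ t))"
      by (intro mult_left_mono) auto
    moreover have "(24::real) ^ t = 4 ^ t * 3 ^ t * 2 ^ t" by (simp flip: power_mult_distrib)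
    ultimately have g: "(4 * real t) ^ t \<le> 24 ^ t * (fact j * fact (t - j))"
      by (simp add: power_mult_distrib ac_simps)
    have "1 / \<bar>\<Prod>k\<in>{..t}-{j}. (real j / (4 * real t) - real k / (4 * real t))\<bar>
       = (4 * real t) ^ t / (fact j * fact (t - j))" using e fp tp by simp
    also have "\<dots> \<le> 24 ^ t" using g fp by (simp add: pos_divide_le_eq)
    finally show ?thesis .
  qed
qed

lemma coeff_bound:
  fixes q :: "real poly"
  assumes t: "t \<ge> 1" and deg: "degree q \<le> t" and bd: "\<forall>y\<in>{0..1/4}. \<bar>poly q y\<bar> \<le> N"
  shows "\<bar>coeff q i\<bar> \<le> 96 ^ t * N"
proof -
  define y where "y k = real k / (4 * real t)" for k
  have tp: "real t > 0" using t by simp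
  have inj: "inj_on y {..t}" using tp by (auto simp: inj_on_def y_def)
  have yin: "y k \<in> {0..1/4}" if "k \<le> t" for k
    using that tp by (auto simp: y_def field_simps)
  have y1: "\<bar>y k\<bar> \<le> 1" if "k \<le> t" for k using yin[OF that] by auto
  have "\<bar>poly q 0\<bar> \<le> N" using bd by simp
  then have N0: "N \<ge> 0" by linarith
  define d where "d j = (\<Prod>k\<in>{..t}-{j}. (y j - y k))" for j
  define P where "P j = (\<Prod>k\<in>{..t}-{j}. [:- y k, 1:])" for j
  have L: "q = (\<Sum>j\<le>t. smult (poly q (y j) / d j) (P j))"
    unfolding d_def P_def by (rule lagrange_interp[OF inj deg])
  have "coeff q i = (\<Sum>j\<le>t. poly q (y j) / d j * coeff (P j) i)"
    by (subst L) (simp add: coeff_sum)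
  also have "\<bar>\<dots>\<bar> \<le> (\<Sum>j\<le>t. \<bar>poly q (y j) / d j * coeff (P j) i\<bar>)" by (rule sum_abs)
  also have "\<dots> \<le> (\<Sum>j\<le>t. N * 24 ^ t * 2 ^ t)"
  proof (rule sum_mono)
    fix j assume j: "j \<in> {..t}"
    have a: "\<bar>poly q (y j)\<bar> \<le> N" using bd yin j by auto
    have b: "1 / \<bar>d j\<bar> \<le> 24 ^ t" unfolding d_def y_def using node_denom[OF t] j by auto
    have "\<bar>coeff (P j) i\<bar> \<le> real (card ({..t}-{j}) choose i)"
      unfolding P_def using y1 by (intro coeff_prod_lin_bound) auto
    also have "\<dots> \<le> 2 ^ t"
    proof -
      have "real (t choose i) \<le> real (2 ^ t)" by (simp only: of_nat_le_iff binomial_le_pow2)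
      then show ?thesis using j by simp
    qed
    finally have c: "\<bar>coeff (P j) i\<bar> \<le> 2 ^ t" .
    have "\<bar>poly q (y j) / d j * coeff (P j) i\<bar> = \<bar>poly q (y j)\<bar> * (1 / \<bar>d j\<bar>) * \<bar>coeff (P j) i\<bar>"
      by (simp add: abs_mult)
    also have "\<dots> \<le> N * 24 ^ t * 2 ^ t"
      using a b c N0 by (intro mult_mono) auto
    finally show "\<bar>poly q (y j) / d j * coeff (P j) i\<bar> \<le> N * 24 ^ t * 2 ^ t" .
  qed
  also have "\<dots> = real (Suc t) * 48 ^ t * N" by (simp add: power_mult_distrib[symmetric])
  also have "\<dots> \<le> 2 ^ t * 48 ^ t * N"
  proof -
    have "Suc t \<le> 2 ^ t" using less_exp[of t] by (simp only: Suc_le_eq)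
    then have "real (Suc t) \<le> real (2 ^ t)" by (simp only: of_nat_le_iff)
    then have "real (Suc t) \<le> 2 ^ t" by simp
    then show ?thesis using N0 by (intro mult_right_mono) auto
  qed
  also have "\<dots> = 96 ^ t * N" by (simp add: power_mult_distrib[symmetric])
  finally show ?thesis .
qed

lemma eval_bound:
  fixes q :: "real poly"
  assumes deg: "degree q \<le> t" and cb: "\<forall>i. \<bar>coeff q i\<bar> \<le> K" and y: "\<bar>y\<bar> \<le> 1"
  shows "\<bar>poly q y\<bar> \<le> real (Suc t) * K"
proof -
  have "\<bar>poly q y\<bar> = \<bar>\<Sum>i\<le>t. coeff q i * y ^ i\<bar>" by (simp add: poly_sum_le_deg[OF deg])
  also have "\<dots> \<le> (\<Sum>i\<le>t. \<bar>coeff q i * y ^ i\<bar>)" by (rule sum_abs)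
  also have "\<dots> \<le> (\<Sum>i\<le>t. K)"
  proof (rule sum_mono)
    fix i
    have "\<bar>y\<bar> ^ i \<le> 1" using y by (simp add: power_le_one)
    then have "\<bar>coeff q i\<bar> * \<bar>y\<bar> ^ i \<le> K * 1" using cb
      by (intro mult_mono) auto
    then show "\<bar>coeff q i * y ^ i\<bar> \<le> K" by (simp add: abs_mult power_abs)
  qed
  finally show ?thesis by simp
qed

lemma eval_bound_big:
  fixes q :: "real poly"
  assumes deg: "degree q \<le> t" and cb: "\<forall>i. \<bar>coeff q i\<bar> \<le> K" and y: "\<bar>y\<bar> \<ge> 1"
  shows "\<bar>poly q y\<bar> \<le> real (Suc t) * K * \<bar>y\<bar> ^ t"
proof -
  have "\<bar>poly q y\<bar> = \<bar>\<Sum>i\<le>t. coeff q i * y ^ i\<bar>" by (simp add: poly_sum_le_deg[OF deg])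
  also have "\<dots> \<le> (\<Sum>i\<le>t. \<bar>coeff q i * y ^ i\<bar>)" by (rule sum_abs)
  also have "\<dots> \<le> (\<Sum>i\<le>t. K * \<bar>y\<bar> ^ t)"
  proof (rule sum_mono)
    fix i assume "i \<in> {..t}"
    then have "\<bar>y\<bar> ^ i \<le> \<bar>y\<bar> ^ t" using y by (intro power_increasing) auto
    then have "\<bar>coeff q i\<bar> * \<bar>y\<bar> ^ i \<le> K * \<bar>y\<bar> ^ t" using cb
      by (intro mult_mono) auto
    then show "\<bar>coeff q i * y ^ i\<bar> \<le> K * \<bar>y\<bar> ^ t" by (simp add: abs_mult power_abs)
  qed
  finally show ?thesis by simp
qed

lemma pow_diff_bound:
  fixes y z :: real
  assumes "\<bar>y\<bar> \<le> 1" "\<bar>z\<bar> \<le> 1"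
  shows "\<bar>y ^ i - z ^ i\<bar> \<le> real i * \<bar>y - z\<bar>"
proof (induction i)
  case 0 then show ?case by simp
next
  case (Suc i)
  have "y ^ Suc i - z ^ Suc i = y * (y ^ i - z ^ i) + z ^ i * (y - z)" by (simp add: algebra_simps)
  then have "\<bar>y ^ Suc i - z ^ Suc i\<bar> \<le> \<bar>y\<bar> * \<bar>y ^ i - z ^ i\<bar> + \<bar>z\<bar> ^ i * \<bar>y - z\<bar>"
    by (metis abs_mult abs_triangle_ineq power_abs)
  also have "\<dots> \<le> 1 * (real i * \<bar>y - z\<bar>) + 1 * \<bar>y - z\<bar>"
    using assms Suc by (intro add_mono mult_mono) (auto simp: power_le_one)
  finally show ?case by (simp add: algebra_simps)
qed

lemma lip_bound:
  fixes q :: "real poly"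
  assumes deg: "degree q \<le> t" and cb: "\<forall>i. \<bar>coeff q i\<bar> \<le> K"
    and y: "\<bar>y\<bar> \<le> 1" and z: "\<bar>z\<bar> \<le> 1"
  shows "\<bar>poly q y - poly q z\<bar> \<le> real (Suc t) * real t * K * \<bar>y - z\<bar>"
proof -
  have "poly q y - poly q z = (\<Sum>i\<le>t. coeff q i * (y ^ i - z ^ i))"
    by (simp add: poly_sum_le_deg[OF deg] sum_subtractf[symmetric] algebra_simps)
  then have "\<bar>poly q y - poly q z\<bar> \<le> (\<Sum>i\<le>t. \<bar>coeff q i * (y ^ i - z ^ i)\<bar>)"
    by (simp add: sum_abs)
  also have "\<dots> \<le> (\<Sum>i\<le>t. K * (real t * \<bar>y - z\<bar>))"
  proof (rule sum_mono)
    fix i assume "i \<in> {..t}"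
    then have "\<bar>y ^ i - z ^ i\<bar> \<le> real t * \<bar>y - z\<bar>"
      using pow_diff_bound[OF y z, of i] by (meson atMost_iff abs_ge_zero mult_right_mono of_nat_le_iff order_trans)
    then show "\<bar>coeff q i * (y ^ i - z ^ i)\<bar> \<le> K * (real t * \<bar>y - z\<bar>)"
      using cb by (simp add: abs_mult) (intro mult_mono, auto)
  qed
  finally show ?thesis by (simp add: algebra_simps)
qed

lemma fact_add_le: "fact (a + b) \<le> fact a * (a + b) ^ b"
proof (induction b)
  case 0 then show ?case by simp
next
  case (Suc b)
  have "fact (a + Suc b) = (a + Suc b) * fact (a + b)" by simp
  also have "\<dots> \<le> (a + Suc b) * (fact a * (a + b) ^ b)" by (rule mult_left_mono[OF Suc.IH]) simp
  also have "\<dots> \<le> (a + Suc b) * (fact a * (a + Suc b) ^ b)"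
    by (intro mult_left_mono power_mono) auto
  also have "\<dots> = fact a * (a + Suc b) ^ Suc b" by (simp add: algebra_simps)
  finally show ?case .
qed

lemma moment_bound: "(\<integral>x. std_normal_density x * x ^ (2 * s) \<partial>lborel) \<le> real s ^ s"
proof -
  have "fact (2 * s) \<le> fact s * (2 * s) ^ s" using fact_add_le[of s s] by (simp add: mult_2)
  then have "real (fact (2 * s)) \<le> real (fact s * (2 * s) ^ s)" by (simp only: of_nat_le_iff)
  then have h: "(fact (2 * s) :: real) \<le> fact s * (2 * real s) ^ s" by simp
  have "(fact (2 * s) :: real) / (2 ^ s * fact s) \<le> fact s * (2 * real s) ^ s / (2 ^ s * fact s)"
    by (rule divide_right_mono[OF h]) simp
  also have "\<dots> = real s ^ s" by (simp add: power_mult_distrib)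
  finally show ?thesis by (simp add: integral_std_normal_moment_even)
qed

lemma integrable_phi_poly: "integrable lborel (\<lambda>x. std_normal_density x * poly p x)"
proof -
  have "(\<lambda>x. std_normal_density x * poly p x) = (\<lambda>x. \<Sum>i\<le>degree p. coeff p i * (std_normal_density x * x ^ i))"
    by (auto simp: poly_altdef sum_distrib_left algebra_simps)
  moreover have "integrable lborel (\<lambda>x. \<Sum>i\<le>degree p. coeff p i * (std_normal_density x * x ^ i))"
    by (auto intro!: integrable_sum integrable_mult_right integrable_std_normal_moment)
  ultimately show ?thesis by simp
qed

lemma numeric_bound:
  assumes "t \<ge> (1::nat)"
  shows "12 * real t * (real t + 1) ^ 2 * 96 ^ (2 * t) * 3 ^ (50 * t) \<le> (96 ^ 3 * 3 ^ 50 :: real) ^ t"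
proof -
  have a: "real t \<le> 2 ^ t" using less_exp[of t]
    by (metis less_imp_le of_nat_le_iff of_nat_numeral of_nat_power)
  have b: "real t + 1 \<le> 2 ^ t" using less_exp[of t]
    by (metis Suc_leI of_nat_Suc of_nat_le_iff of_nat_numeral of_nat_power add.commute)
  have c: "(12::real) \<le> 12 ^ t" using assms by (simp add: one_le_power order_trans[OF _ power_increasing[of 1 t]])
  have "12 * real t * (real t + 1) ^ 2 \<le> 12 ^ t * 2 ^ t * (2 ^ t) ^ 2"
    using a b c by (intro mult_mono power_mono) auto
  also have "\<dots> = (96::real) ^ t"
  proof -
    have "((2::real) ^ t) ^ 2 = 4 ^ t" by (simp add: power2_eq_square power_mult_distrib[symmetric])
    then show ?thesis by (simp add: power_mult_distrib[symmetric])
  qed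
  finally have d: "12 * real t * (real t + 1) ^ 2 \<le> (96::real) ^ t" .
  have "12 * real t * (real t + 1) ^ 2 * 96 ^ (2 * t) * 3 ^ (50 * t) \<le> 96 ^ t * 96 ^ (2 * t) * (3::real) ^ (50 * t)"
    using d by (intro mult_right_mono) auto
  also have "\<dots> = (96 ^ 3 * 3 ^ 50 :: real) ^ t"
  proof -
    have e1: "(96::real) ^ t * 96 ^ (2 * t) = 96 ^ (3 * t)" by (subst power_add[symmetric]) simp
    have e2: "(96 ^ 3 * 3 ^ 50 :: real) ^ t = 96 ^ (3 * t) * 3 ^ (50 * t)"
      by (simp only: power_mult_distrib power_mult)
    show ?thesis by (simp only: e1 e2)
  qed
  finally show ?thesis .
qed

lemma numeric_const: "(96 ^ 3 * 3 ^ 50 :: real) \<le> 2 ^ 110" by simp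

lemma main_lemma:
  fixes t :: nat and p :: "real poly"
  assumes t20: "real t > 20" and p0: "p \<noteq> 0" and deg: "degree p \<le> t"
    and E: "gauss_expect (poly p) = 0"
  defines "I \<equiv> {- 20 * sqrt (real t) .. 20 * sqrt (real t)}"
  shows "(INF x\<in>I. poly p x) < 0 \<and>
         (SUP x\<in>I. poly p x) / \<bar>INF x\<in>I. poly p x\<bar> \<le> 2 powr (110 * real t)"
proof -
  have t1: "t \<ge> 1" using t20 by simp
  define R where "R = 20 * sqrt (real t)"
  have st: "sqrt (real t) \<ge> 1" using t1 by simp
  have R1: "R \<ge> 1" unfolding R_def using st by linarith
  have Rpos: "R > 0" using R1 by simp
  have R2: "R ^ 2 = 400 * real t" by (simp add: R_def power_mult_distrib)
  have IR: "I = {-R..R}" by (simp add: I_def R_def)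
  define q where "q = pcompose p [:0, R:]"
  have pq: "\<And>y. poly q y = poly p (R * y)" by (simp add: q_def poly_pcompose mult.commute)
  have degq: "degree q \<le> t" using deg Rpos by (simp add: q_def degree_pcompose)
  have pxq: "\<And>x. poly p x = poly q (x / R)" using pq Rpos by simp
  obtain y1 where y1: "y1 \<in> {-1/4..1/4}" and y1max: "\<forall>y\<in>{-1/4..1/4}. \<bar>poly q y\<bar> \<le> \<bar>poly q y1\<bar>"
  proof -
    have c: "continuous_on {-1/4..1/4::real} (\<lambda>y. \<bar>poly q y\<bar>)" by (intro continuous_intros)
    have "\<exists>y\<in>{-1/4..1/4::real}. \<forall>z\<in>{-1/4..1/4}. \<bar>poly q z\<bar> \<le> \<bar>poly q y\<bar>"
      by (rule continuous_attains_sup[OF _ _ c]) auto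
    then show ?thesis using that by blast
  qed
  define N where "N = \<bar>poly q y1\<bar>"
  define K where "K = 96 ^ t * N"
  have cb: "\<forall>i. \<bar>coeff q i\<bar> \<le> K"
    unfolding K_def by (intro allI coeff_bound[OF t1 degq]) (use y1max in \<open>auto simp: N_def\<close>)
  have Npos: "N > 0"
  proof (rule ccontr)
    assume "\<not> N > 0"
    then have "N = 0" using N_def by simp
    then have "\<forall>i. coeff q i = 0" using cb K_def by simp
    then have "q = 0" by (simp add: poly_eq_iff)
    then have "\<forall>x. poly p x = 0" using pxq by simp
    then have "p = 0" using poly_all_0_iff_0 by blast
    with p0 show False by simp
  qed
  have Kpos: "K > 0" using Npos by (simp add: K_def)
  have bndI: "\<bar>poly p x\<bar> \<le> real (Suc t) * K" if "x \<in> I" for x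
  proof -
    have "\<bar>x / R\<bar> \<le> 1" using that IR Rpos by (auto simp: abs_le_iff field_simps)
    then show ?thesis using eval_bound[OF degq cb] pxq by simp
  qed
  have bndO: "\<bar>poly p x\<bar> \<le> real (Suc t) * K * (x / R) ^ (2 * (50 * t))" if "x \<notin> I" for x
  proof -
    have xr: "\<bar>x / R\<bar> \<ge> 1" using that IR Rpos by (auto simp: abs_le_iff field_simps)
    have "\<bar>poly p x\<bar> \<le> real (Suc t) * K * \<bar>x / R\<bar> ^ t"
      using eval_bound_big[OF degq cb xr] pxq by simp
    also have "\<dots> \<le> real (Suc t) * K * \<bar>x / R\<bar> ^ (2 * (50 * t))"
      using xr Kpos by (intro mult_left_mono power_increasing) auto
    also have "\<bar>x / R\<bar> ^ (2 * (50 * t)) = (x / R) ^ (2 * (50 * t))"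
      by (rule power_even_abs) simp
    finally show ?thesis .
  qed
  have Icomp: "compact I" "I \<noteq> {}" using Rpos IR by auto
  have Icont: "continuous_on I (poly p)" by (intro continuous_intros)
  obtain xmin where xmin: "xmin \<in> I" "\<forall>x\<in>I. poly p xmin \<le> poly p x"
    using continuous_attains_inf[OF Icomp Icont] by blast
  obtain xmax where xmax: "xmax \<in> I" "\<forall>x\<in>I. poly p x \<le> poly p xmax"
    using continuous_attains_sup[OF Icomp Icont] by blast
  have INFe: "(INF x\<in>I. poly p x) = poly p xmin"
    by (rule cInf_eq_minimum) (use xmin in auto)
  have SUPe: "(SUP x\<in>I. poly p x) = poly p xmax"
    by (rule cSup_eq_maximum) (use xmax in auto)
  define mi where "mi = poly p xmin"
  define Mx where "Mx = poly p xmax"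
  define D where "D = 12 * real t * (real t + 1) * 96 ^ t * 3 ^ (50 * t)"
  have Dpos: "D > 0" using t1 by (simp add: D_def)
  have D1: "D \<ge> 1"
  proof -
    have a: "(1::real) \<le> 12 * real t" using t1 by simp
    have b: "(1::real) \<le> real t + 1" by simp
    have c: "(1::real) \<le> 96 ^ t" by (simp add: one_le_power)
    have d: "(1::real) \<le> 3 ^ (50 * t)" by (simp add: one_le_power)
    have "(1::real) * 1 * 1 * 1 \<le> 12 * real t * (real t + 1) * 96 ^ t * 3 ^ (50 * t)"
      by (intro mult_mono) (use a b c d in auto)
    then show ?thesis by (simp add: D_def)
  qed
  have key: "- mi \<ge> N / D"
  proof (cases "poly q y1 = - N")
    case True
    have "\<bar>y1\<bar> \<le> 1" using y1 by auto
    then have "R * \<bar>y1\<bar> \<le> R * 1" by (intro mult_left_mono) (use Rpos in auto)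
    then have "\<bar>R * y1\<bar> \<le> R" using Rpos by (simp add: abs_mult)
    then have "R * y1 \<in> I" using IR by (auto simp: abs_le_iff)
    then have "mi \<le> - N" using xmin True pq by (auto simp: mi_def)
    moreover have "N / D \<le> N" using D1 Npos by (simp add: divide_le_eq)
    ultimately show ?thesis by simp
  next
    case False
    then have qN: "poly q y1 = N" using N_def by (auto simp: abs_if split: if_splits)
    define \<delta> where "\<delta> = 1 / (2 * real t * (real t + 1) * 96 ^ t)"
    have dpos: "\<delta> > 0" using t1 by (simp add: \<delta>_def)
    have dle: "\<delta> \<le> 1/4"
    proof -
      have "(4::real) \<le> 2 * real t * (real t + 1) * 96 ^ t"
      proof -
        have "(2::real) * 1 * 2 * 1 \<le> 2 * real t * (real t + 1) * 96 ^ t"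
          using t1 by (intro mult_mono) (auto simp: one_le_power)
        then show ?thesis by simp
      qed
      then show ?thesis unfolding \<delta>_def by (simp add: divide_le_eq)
    qed
    define S where "S = {R * (y1 - \<delta>) .. R * (y1 + \<delta>)}"
    have Sx: "\<bar>x / R - y1\<bar> \<le> \<delta>" if "x \<in> S" for x
    proof -
      have "R * (y1 - \<delta>) \<le> x" "x \<le> R * (y1 + \<delta>)" using that by (auto simp: S_def)
      then have "y1 - \<delta> \<le> x / R" "x / R \<le> y1 + \<delta>" using Rpos
        by (simp_all add: le_divide_eq divide_le_eq mult.commute)
      then show ?thesis by (simp add: abs_le_iff)
    qed
    have Sy: "\<bar>x / R\<bar> \<le> 1/2" if "x \<in> S" for x
      using Sx[OF that] y1 dle by (auto simp: abs_le_iff)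
    have Shalf: "\<bar>x\<bar> \<le> R / 2" if "x \<in> S" for x
    proof -
      have "\<bar>x\<bar> = R * \<bar>x / R\<bar>" using Rpos by (simp add: abs_div)
      also have "\<dots> \<le> R * (1/2)" using Sy[OF that] Rpos by (intro mult_left_mono) auto
      finally show ?thesis by simp
    qed
    have SI: "S \<subseteq> I" using Shalf Rpos IR by (force simp: abs_le_iff)
    have Sbig: "poly p x \<ge> N / 2" if "x \<in> S" for x
    proof -
      have a1: "\<bar>x / R\<bar> \<le> 1" using Sy[OF that] by linarith
      have a2: "\<bar>y1\<bar> \<le> 1" using y1 by auto
      have "\<bar>poly q (x / R) - poly q y1\<bar> \<le> real (Suc t) * real t * K * \<bar>x / R - y1\<bar>"
        by (rule lip_bound[OF degq cb a1 a2])
      also have "\<dots> \<le> real (Suc t) * real t * K * \<delta>"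
        using Sx[OF that] Kpos by (intro mult_left_mono) auto
      also have "\<dots> = N / 2"
      proof -
        define Z where "Z = real t * (real t + 1) * 96 ^ t"
        have Zp: "Z > 0" using t1 by (simp add: Z_def)
        have dd: "\<delta> = 1 / (2 * Z)" by (simp add: \<delta>_def Z_def mult.assoc)
        have dz: "\<delta> * (2 * Z) = 1" using Zp by (simp add: dd)
        have "real (Suc t) * real t * K * \<delta> = N / 2 * (\<delta> * (2 * Z))"
          by (simp add: K_def Z_def algebra_simps)
        then show ?thesis using dz by simp
      qed
      finally have "- (poly q (x / R) - poly q y1) \<le> N / 2" by (rule abs_le_D2)
      then show ?thesis using pxq[of x] qN by linarith
    qed
    define \<phi>min where "\<phi>min = exp (- 50 * real t) / sqrt (2 * pi)"
    have phimin0: "\<phi>min \<ge> 0" by (simp add: \<phi>min_def)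
    have phiS: "\<phi>min \<le> std_normal_density x" if "x \<in> S" for x
    proof -
      have "x ^ 2 = \<bar>x\<bar> ^ 2" by simp
      also have "\<dots> \<le> (R / 2) ^ 2" using Shalf[OF that] by (intro power_mono) auto
      also have "\<dots> = 100 * real t" using R2 by (simp add: power_divide)
      finally have "- 50 * real t \<le> - (x ^ 2) / 2" by simp
      then have "exp (- 50 * real t) \<le> exp (- (x ^ 2) / 2)" by simp
      then show ?thesis unfolding \<phi>min_def std_normal_density_def
        by (simp add: divide_right_mono)
    qed
    define mp where "mp = max (- mi) 0"
    define s where "s = 50 * t"
    define B where "B = real (Suc t) * K / R ^ (2 * s)"
    define a where "a = N / 2 * \<phi>min"
    have B0: "B \<ge> 0" using Kpos Rpos by (simp add: B_def)
    have ev0: "x ^ (2 * s) \<ge> 0" for x :: real by (simp add: power_mult)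
    have pw: "a * indicator S x - mp * std_normal_density x - B * (std_normal_density x * x ^ (2 * s))
        \<le> std_normal_density x * poly p x" for x
    proof -
      have phi0: "std_normal_density x \<ge> 0" by simp
      have Bx: "B * (std_normal_density x * x ^ (2 * s)) \<ge> 0" using B0 phi0 ev0 by simp
      have mp0: "mp \<ge> 0" "mp \<ge> - mi" by (auto simp: mp_def)
      consider "x \<in> S" | "x \<in> I" "x \<notin> S" | "x \<notin> I" by blast
      then show ?thesis
      proof cases
        case 1
        have "\<phi>min * (N / 2) \<le> std_normal_density x * poly p x"
          using phiS[OF 1] Sbig[OF 1] phimin0 Npos by (intro mult_mono) auto
        moreover have "a * indicator S x = \<phi>min * (N / 2)" using 1 by (simp add: a_def)
        moreover have "mp * std_normal_density x \<ge> 0" using mp0 phi0 by simp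
        ultimately show ?thesis using Bx by linarith
      next
        case 2
        have "mi \<le> poly p x" using xmin 2 by (simp add: mi_def)
        then have "std_normal_density x * (- mp) \<le> std_normal_density x * poly p x"
          using mp0 phi0 by (intro mult_left_mono) auto
        moreover have "a * indicator S x = 0" using 2 by simp
        moreover have "std_normal_density x * (- mp) = - (mp * std_normal_density x)" by simp
        ultimately show ?thesis using Bx by linarith
      next
        case 3
        have nS: "x \<notin> S" using 3 SI by auto
        have "\<bar>poly p x\<bar> \<le> real (Suc t) * K * (x / R) ^ (2 * s)"
          using bndO[OF 3] by (simp add: s_def)
        also have "\<dots> = B * x ^ (2 * s)" by (simp add: B_def power_divide)
        finally have "- (B * x ^ (2 * s)) \<le> poly p x" by (simp add: abs_le_iff)
        then have "std_normal_density x * (- (B * x ^ (2 * s))) \<le> std_normal_density x * poly p x"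
          using phi0 by (intro mult_left_mono) auto
        moreover have "mp * std_normal_density x \<ge> 0" using mp0 phi0 by simp
        ultimately show ?thesis using nS by (simp add: algebra_simps)
      qed
    qed
    have iS: "integrable lborel (indicator S :: real \<Rightarrow> real)"
      by (intro integrable_real_indicator) (auto simp: S_def emeasure_lborel_Icc_eq)
    have i1: "integrable lborel (\<lambda>x. a * indicator S x :: real)" using iS by simp
    have i2: "integrable lborel (\<lambda>x. mp * std_normal_density x)" by simp
    have i3: "integrable lborel (\<lambda>x. B * (std_normal_density x * x ^ (2 * s)))"
      by (intro integrable_mult_right integrable_std_normal_moment)
    have iL: "integrable lborel (\<lambda>x. a * indicator S x - mp * std_normal_density x - B * (std_normal_density x * x ^ (2 * s)))"
      using i1 i2 i3 by simp
    have "(\<integral>x. a * indicator S x - mp * std_normal_density x - B * (std_normal_density x * x ^ (2 * s)) \<partial>lborel)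
        \<le> (\<integral>x. std_normal_density x * poly p x \<partial>lborel)"
      by (rule Bochner_Integration.integral_mono[OF iL integrable_phi_poly]) (use pw in auto)
    also have "\<dots> = 0" using E by (simp add: gauss_expect_def)
    finally have int0: "(\<integral>x. a * indicator S x - mp * std_normal_density x - B * (std_normal_density x * x ^ (2 * s)) \<partial>lborel) \<le> 0" .
    have "(\<integral>x. a * indicator S x - mp * std_normal_density x - B * (std_normal_density x * x ^ (2 * s)) \<partial>lborel)
       = a * measure lborel S - mp - B * (\<integral>x. std_normal_density x * x ^ (2 * s) \<partial>lborel)"
      using i1 i2 i3 iS by (simp add: Bochner_Integration.integral_diff)
    also have "measure lborel S = 2 * R * \<delta>" using Rpos dpos by (simp add: S_def algebra_simps)
    finally have int1: "a * (2 * R * \<delta>) - mp - B * (\<integral>x. std_normal_density x * x ^ (2 * s) \<partial>lborel) \<le> 0"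
      using int0 by simp
    have mom: "B * (\<integral>x. std_normal_density x * x ^ (2 * s) \<partial>lborel) \<le> B * real s ^ s"
      using B0 moment_bound[of s] by (intro mult_left_mono) auto
    have spos: "real s > 0" using t1 by (simp add: s_def)
    have Bs: "B * real s ^ s = real (Suc t) * K * (1 / 8) ^ s"
    proof -
      have e8: "8 * real s = 400 * real t" by (simp add: s_def)
      have "R ^ (2 * s) = (R ^ 2) ^ s" by (simp only: power_mult)
      also have "\<dots> = (8 * real s) ^ s" by (simp only: R2 e8)
      finally have "R ^ (2 * s) = (8 * real s) ^ s" .
      then show ?thesis using spos by (simp add: B_def power_divide power_mult_distrib)
    qed
    have tail: "real (Suc t) * K * (1 / 8) ^ s \<le> N / D"
    proof -
      have "real (Suc t) * 96 ^ t * D = 12 * real t * (real t + 1) ^ 2 * 96 ^ (2 * t) * 3 ^ (50 * t)"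
      proof -
        have h96: "(96::real) ^ (2 * t) = 96 ^ t * 96 ^ t" by (simp add: mult_2 power_add)
        show ?thesis unfolding D_def h96 power2_eq_square by (simp add: algebra_simps)
      qed
      also have "\<dots> \<le> (96 ^ 3 * 3 ^ 50 :: real) ^ t" by (rule numeric_bound[OF t1])
      also have "\<dots> \<le> (2 ^ 150) ^ t" by (intro power_mono) auto
      also have "\<dots> = 8 ^ s"
      proof -
        have "(2::real) ^ 150 = 8 ^ 50" by simp
        then show ?thesis by (simp only: s_def power_mult)
      qed
      finally have h: "real (Suc t) * 96 ^ t * D \<le> 8 ^ s" .
      have k1: "real (Suc t) * 96 ^ t \<le> 8 ^ s / D" using h Dpos by (simp add: pos_le_divide_eq)
      have k2: "real (Suc t) * 96 ^ t / 8 ^ s \<le> 1 / D"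
        by (subst pos_divide_le_eq) (use k1 in simp_all)
      have "real (Suc t) * K * (1 / 8) ^ s = N * (real (Suc t) * 96 ^ t / 8 ^ s)"
        by (simp add: K_def power_one_over)
      also have "\<dots> \<le> N * (1 / D)" using k2 Npos by (intro mult_left_mono) auto
      finally show ?thesis by simp
    qed
    have phimin_lb: "\<phi>min \<ge> 1 / (3 * 3 ^ (50 * t))"
    proof -
      have "exp (real (50 * t)) = exp 1 ^ (50 * t)" using exp_of_nat_mult[of "50 * t" 1] by simp
      also have "\<dots> \<le> 3 ^ (50 * t)" by (rule power_mono) (use exp_le in auto)
      finally have e1: "exp (50 * real t) \<le> 3 ^ (50 * t)" by simp
      have "exp (- 50 * real t) = exp (- (50 * real t))" by simp
      also have "\<dots> = inverse (exp (50 * real t))" by (rule exp_minus)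
      finally have e2: "exp (- 50 * real t) = 1 / exp (50 * real t)" by (simp add: inverse_eq_divide)
      have e3: "1 / 3 ^ (50 * t) \<le> exp (- 50 * real t)" unfolding e2 using e1
        by (intro divide_left_mono) auto
      have "sqrt (2 * pi) \<le> sqrt 9" using pi_less_4 by (intro real_sqrt_le_mono) simp
      then have s3: "sqrt (2 * pi) \<le> 3" by simp
      have "1 / (3 * 3 ^ (50 * t)) = (1 / 3 ^ (50 * t)) / (3::real)" by simp
      also have "\<dots> \<le> exp (- 50 * real t) / 3" using e3 by (intro divide_right_mono) auto
      also have "\<dots> \<le> exp (- 50 * real t) / sqrt (2 * pi)" using s3 by (intro divide_left_mono) auto
      finally show ?thesis by (simp add: \<phi>min_def)
    qed
    have main: "a * (2 * R * \<delta>) \<ge> 2 * (N / D)"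
    proof -
      have "a * (2 * R * \<delta>) = N * \<phi>min * R * \<delta>" by (simp add: a_def)
      also have "\<dots> \<ge> N * (1 / (3 * 3 ^ (50 * t))) * 1 * \<delta>"
        using phimin_lb R1 Npos dpos phimin0 by (intro mult_mono mult_right_mono) auto
      finally have "a * (2 * R * \<delta>) \<ge> N * (1 / (3 * 3 ^ (50 * t))) * \<delta>" by simp
      moreover have "N * (1 / (3 * 3 ^ (50 * t))) * \<delta> = 2 * (N / D)"
      proof -
        have "D = 2 * ((3 * 3 ^ (50 * t)) * (2 * real t * (real t + 1) * 96 ^ t))"
          by (simp add: D_def algebra_simps)
        then show ?thesis by (simp add: \<delta>_def)
      qed
      ultimately show ?thesis by simp
    qed
    have "mp \<ge> N / D" using int1 mom Bs tail main by linarith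
    moreover have "N / D > 0" using Npos Dpos by simp
    ultimately show ?thesis by (auto simp: mp_def)
  qed
  have "N / D > 0" using Npos Dpos by simp
  then have mineg: "mi < 0" using key by linarith
  have Mxb: "Mx \<le> real (Suc t) * K" using bndI[OF xmax(1)] by (simp add: Mx_def)
  have ratio: "Mx / \<bar>mi\<bar> \<le> 2 powr (110 * real t)"
  proof (cases "Mx \<le> 0")
    case True
    then have "Mx / \<bar>mi\<bar> \<le> 0" by (simp add: divide_nonpos_nonneg)
    moreover have "0 < 2 powr (110 * real t)" by simp
    ultimately show ?thesis by linarith
  next
    case False
    have "Mx / \<bar>mi\<bar> \<le> (real (Suc t) * K) / (N / D)"
      using False Mxb key mineg Npos Dpos by (intro frac_le) auto
    also have "\<dots> = real (Suc t) * 96 ^ t * D"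
      using Npos Dpos by (simp add: K_def)
    also have "\<dots> = 12 * real t * (real t + 1) ^ 2 * 96 ^ (2 * t) * 3 ^ (50 * t)"
    proof -
      have h96: "(96::real) ^ (2 * t) = 96 ^ t * 96 ^ t" by (simp add: mult_2 power_add)
      show ?thesis unfolding D_def h96 power2_eq_square by (simp add: algebra_simps)
    qed
    also have "\<dots> \<le> (96 ^ 3 * 3 ^ 50 :: real) ^ t" by (rule numeric_bound[OF t1])
    also have "\<dots> \<le> (2 ^ 110) ^ t" by (intro power_mono numeric_const) auto
    also have "\<dots> = 2 powr (110 * real t)"
    proof -
      have h1: "2 powr (110 * real t) = 2 powr real (110 * t)" by simp
      have h2: "(2::real) powr real (110 * t) = 2 ^ (110 * t)" by (rule powr_realpow) simp
      have h3: "(2::real) ^ (110 * t) = (2 ^ 110) ^ t" by (simp only: power_mult)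
      show ?thesis by (simp only: h1 h2 h3)
    qed
    finally show ?thesis .
  qed
  show ?thesis using INFe SUPe mineg ratio by (simp add: mi_def Mx_def)
qed



theorem mainTheorem5:
  shows "\<exists>C0 C1 :: real. C0 > 0 \<and> C1 > 0 \<and>
    (\<forall>t :: nat. real t > C0 \<longrightarrow>
      (let I = {- C0 * sqrt (real t) .. C0 * sqrt (real t)} in
       \<forall>p :: real poly. p \<noteq> 0 \<longrightarrow> degree p \<le> t \<longrightarrow>
         gauss_expect (poly p) = 0 \<longrightarrow>
         (INF x\<in>I. poly p x) < 0 \<and>
         (SUP x\<in>I. poly p x) / \<bar>INF x\<in>I. poly p x\<bar> \<le> 2 powr (C1 * real t)))"
proof -
  have "\<forall>t :: nat. real t > 20 \<longrightarrow>
      (let I = {- 20 * sqrt (real t) .. 20 * sqrt (real t)} in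
       \<forall>p :: real poly. p \<noteq> 0 \<longrightarrow> degree p \<le> t \<longrightarrow>
         gauss_expect (poly p) = 0 \<longrightarrow>
         (INF x\<in>I. poly p x) < 0 \<and>
         (SUP x\<in>I. poly p x) / \<bar>INF x\<in>I. poly p x\<bar> \<le> 2 powr (110 * real t))"
    using main_lemma by (auto simp: Let_def)
  then show ?thesis by (intro exI[of _ 20] exI[of _ 110]) simp
qed

end
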